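(* There exists a system (ground truth $\bar A$, basis function $f$, and attack model following the probabilistic attack model with parameter $p\in(0,1)$) satisfying Assumptions (A3), (A4) and (A6) such that for every $T\ge1$, with probability at least $p[1-(1-p)^{T-1}]$, $\bar A$ is not a global minimizer of $\min_{A}\sum_{t=0}^{T-1}\|x_{t+1}-Af(x_t)\|_2$. (For instance, with $m=n$: $\bar A=\rho I_n$ for a constant $\rho\ge 2+\sqrt6$, $f(x)=x$, and, conditional on $\mathcal F_t$ and $\bar d_t\neq0$, $\bar d_t$ uniformly distributed on the unit sphere $\{d\in\mathbb{R}^n:\|d\|_2=1\}$.)
   Context: System: $x_0=0_n$, $x_{t+1}=\bar A f(x_t)+\bar d_t$ for $t=0,\dots,T-1$. Filtration $\mathcal F_t:=\sigma\{x_0,\dots,x_t\}$. Probabilistic attack model: for each $t$, $\bar d_t\neq 0$ with probability $p$, independently across time. (A3) Conditional on $\mathcal F_t$ and $\bar d_t\ne0_n$, $\lambda_{\min}\big(\mathbb{E}[f(x+\bar d_t)f(x+\bar d_t)^\top\mid\mathcal F_t,\bar d_t\ne0_n]\big)\ge\lambda^2$ for all $x$, some $\lambda>0$. (A4) $f(0_n)=0_m$ and $f$ is $L$-Lipschitz in $\ell_2$. (A6) Conditional on $\mathcal F_t$ and $\bar d_t\ne0_n$: $\bar d_t=\ell_t\hat d_t$ with $\hat d_t,\ell_t$ conditionally independent, $\|\hat d_t\|_2=1$, $\hat d_t$ conditionally zero-mean, and $\ell_t$ zero-mean sub-Gaussian with parameter $\sigma$. The stability condition $\|\bar A\|_2<1/L$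 is violated by the construction. *)

theory Defs
  imports "HOL-Analysis.Analysis" "HOL-Probability.Probability"
begin

primrec traj :: "real^'m^'n \<Rightarrow> (real^'n \<Rightarrow> real^'m) \<Rightarrow> (nat \<Rightarrow> 'a \<Rightarrow> real^'n)
                 \<Rightarrow> nat \<Rightarrow> 'a \<Rightarrow> real^'n" where
  "traj A f d 0 w = 0"
| "traj A f d (Suc t) w = A *v f (traj A f d t w) + d t w"

text \<open>Sigma-algebra generated by x_0, ..., x_t together with the event {d_t \<noteq> 0}:
  conditioning on it, on the event d_t \<noteq> 0, is conditioning on F_t and d_t \<noteq> 0.\<close>
definition condalg :: "'a measure \<Rightarrow> real^'m^'n \<Rightarrow> (real^'n \<Rightarrow> real^'m)
                     \<Rightarrow> (nat \<Rightarrow> 'a \<Rightarrow> real^'n) \<Rightarrow> nat \<Rightarrow> 'a measure" where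
  "condalg M A f d t = sigma (space M)
     ({traj A f d s -` B \<inter> space M | s B. s \<le> t \<and> B \<in> sets borel}
      \<union> {{w \<in> space M. d t w \<noteq> 0}})"

text \<open>Minimal eigenvalue of a square real matrix (used for symmetric matrices,
  whose eigenvalues are real).\<close>
definition lambda_min :: "real^'n^'n \<Rightarrow> real" where
  "lambda_min S = Min {mu. \<exists>v. v \<noteq> 0 \<and> S *v v = mu *\<^sub>R v}"

text \<open>"P holds for the conditional expectation given G, conditional on event B":
  almost surely on B.\<close>
definition cond_on :: "'a measure \<Rightarrow> ('a \<Rightarrow> bool) \<Rightarrow> ('a \<Rightarrow> bool) \<Rightarrow> bool" where
  "cond_on M B P \<longleftrightarrow> (AE w in M. B w \<longrightarrow> P w)"

definition cond_indep_on :: "'a measure \<Rightarrow> 'a measure \<Rightarrow> ('a \<Rightarrow> bool)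
      \<Rightarrow> ('a \<Rightarrow> 'b::topological_space) \<Rightarrow> ('a \<Rightarrow> 'c::topological_space) \<Rightarrow> bool" where
  "cond_indep_on M G B X Y \<longleftrightarrow>
     (\<forall>S \<in> sets borel. \<forall>U \<in> sets borel. cond_on M B (\<lambda>w.
        real_cond_exp M G (\<lambda>w. indicator (X -` S) w * indicator (Y -` U) w) w
        = real_cond_exp M G (indicator (X -` S)) w * real_cond_exp M G (indicator (Y -` U)) w))"

definition cost :: "real^'m^'n \<Rightarrow> (real^'n \<Rightarrow> real^'m) \<Rightarrow> (nat \<Rightarrow> 'a \<Rightarrow> real^'n)
                    \<Rightarrow> real^'m^'n \<Rightarrow> nat \<Rightarrow> 'a \<Rightarrow> real" where
  "cost Abar f d A T w = (\<Sum>t<T. norm (traj Abar f d (Suc t) w - A *v f (traj Abar f d t w)))"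

end

theory Submission
  imports Defs
begin



lemma cexp_indep:
  fixes M :: "'a measure" and h :: "'c \<Rightarrow> real"
  assumes P: "prob_space M"
  and sub: "subalgebra M G"
  and ind: "prob_space.indep_var M N Y Pm Z"
  and GY: "sets G \<subseteq> sets (vimage_algebra (space M) Y N)"
  and Ym: "Y \<in> measurable M N" and Zm: "Z \<in> measurable M Pm"
  and hm: "h \<in> borel_measurable Pm" and hint: "integrable M (\<lambda>w. h (Z w))"
  shows "AE w in M. real_cond_exp M G (\<lambda>w. h (Z w)) w = (\<integral>w. h (Z w) \<partial>M)"
proof -
  interpret prob_space M by fact
  interpret finite_measure_subalgebra M G by unfold_locales (rule sub)
  show ?thesis
  proof (rule real_cond_exp_charact)
    fix A assume A: "A \<in> sets G"
    have Yf: "Y \<in> space M \<rightarrow> space N" using Ym by (simp add: measurable_def)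
    have "A \<in> {Y -` S \<inter> space M |S. S \<in> sets N}"
      using GY A sets_vimage_algebra2[OF Yf] by blast
    then obtain S where S: "S \<in> sets N" "A = Y -` S \<inter> space M"
      by blast
    have AM: "A \<in> sets M" using A sub unfolding subalgebra_def by auto
    have ind2: "indep_var borel (indicator S \<circ> Y) borel (h \<circ> Z)"
      using indep_var_compose[OF ind borel_measurable_indicator[OF S(1)] hm] .
    have i1: "integrable M (\<lambda>x. indicator S (Y x) :: real)"
      by (rule integrable_const_bound[where B=1]) (auto intro: measurable_compose[OF Ym borel_measurable_indicator[OF S(1)]])
    have "(\<integral>x\<in>A. h (Z x) \<partial>M) = (\<integral>x. indicator S (Y x) * h (Z x) \<partial>M)"
      unfolding set_lebesgue_integral_def
      by (rule Bochner_Integration.integral_cong) (simp_all add: S indicator_def)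
    also have "\<dots> = (\<integral>x. indicator S (Y x) \<partial>M) * (\<integral>x. h (Z x) \<partial>M)"
      using indep_var_lebesgue_integral[OF ind2] i1 hint by (simp add: comp_def)
    also have "(\<integral>x. indicator S (Y x) \<partial>M) = (\<integral>x. indicator A x \<partial>M)"
      by (rule Bochner_Integration.integral_cong) (simp_all add: S indicator_def)
    also have "\<dots> = measure M A"
      using AM by simp
    also have "measure M A * (\<integral>x. h (Z x) \<partial>M) = (\<integral>x\<in>A. (\<integral>w. h (Z w) \<partial>M) \<partial>M)"
      using AM by (simp add: set_integral_const) 
    finally show "(\<integral>x\<in>A. h (Z x) \<partial>M) = (\<integral>x\<in>A. (\<integral>w. h (Z w) \<partial>M) \<partial>M)" .
  next
    show "integrable M (\<lambda>w. h (Z w))" by (rule hint)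
  next
    show "integrable M (\<lambda>x. \<integral>w. h (Z w) \<partial>M)" by simp
  next
    show "(\<lambda>x. \<integral>w. h (Z w) \<partial>M) \<in> borel_measurable G" by simp
  qed
qed


definition vecf :: "'n::finite \<times> bool \<Rightarrow> real^'n" where
  "vecf z = (if snd z then 1 else -1) *\<^sub>R axis (fst z) 1"
definition Bf :: "real \<times> (real^'n::finite) \<Rightarrow> real" where "Bf z = (if fst z = 1 then 1 else 0)"
definition Sf :: "real \<times> (real^'n::finite) \<Rightarrow> real" where "Sf z = (if fst z = 1 then 1 else -1)"
definition Xf :: "real \<times> (real^'n::finite) \<Rightarrow> real^'n" where
  "Xf z = (if snd z \<in> range vecf then snd z else axis undefined 1)"

definition mu :: "real \<Rightarrow> nat \<Rightarrow> (real \<times> (real^'n::finite)) pmf" where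
  "mu p k = (if k mod 3 = 0 then map_pmf (\<lambda>b. (if b then 1 else 0, 0)) (bernoulli_pmf p)
     else if k mod 3 = 1 then map_pmf (\<lambda>b. (if b then 1 else -1, 0)) (bernoulli_pmf (1/2))
     else map_pmf (\<lambda>z. (0, vecf z)) (pmf_of_set UNIV))"

definition MM :: "real \<Rightarrow> (nat \<Rightarrow> real \<times> (real^'n::finite)) measure" where
  "MM p = PiM UNIV (\<lambda>k. measure_pmf (mu p k))"

definition dd :: "nat \<Rightarrow> (nat \<Rightarrow> real \<times> (real^'n::finite)) \<Rightarrow> real^'n" where
  "dd t w = Bf (w (3*t)) *\<^sub>R (Sf (w (3*t+1)) *\<^sub>R Xf (w (3*t+2)))"

definition Ab :: "real^'n^'n::finite" where "Ab = (4::real) *\<^sub>R mat 1"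

lemma Ab_mult: "Ab *v v = 4 *\<^sub>R v"
  by (simp add: Ab_def scaleR_matrix_vector_assoc[symmetric])

lemma norm_vecf: "norm (vecf z) = 1"
  by (simp add: vecf_def)

lemma norm_Xf: "norm (Xf z) = 1"
  by (auto simp: Xf_def norm_vecf)

lemma Xf_nz: "Xf z \<noteq> 0"
  using norm_Xf[of z] by auto

lemma Sf_sq: "Sf z * Sf z = 1" by (simp add: Sf_def)
lemma Bf_sq: "Bf z * Bf z = Bf z" by (simp add: Bf_def)
lemma Bf_01: "Bf z = 0 \<or> Bf z = 1" by (simp add: Bf_def)

lemma dd_nz: "dd t w \<noteq> 0 \<longleftrightarrow> Bf (w (3*t)) \<noteq> 0"
  by (simp add: dd_def Xf_nz Sf_def)

lemma dd_norm: "dd t w = 0 \<or> norm (dd t w) = 1"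
  using Bf_01[of "w (3*t)"] by (auto simp: dd_def norm_Xf Sf_def)

lemma prob_MM: "prob_space (MM p)"
  unfolding MM_def by (rule prob_space_PiM) (simp add: prob_space_measure_pmf)

lemma space_MM: "space (MM p) = UNIV"
  by (simp add: MM_def space_PiM)

lemma meas_coord:
  fixes g :: "real \<times> (real^'n::finite) \<Rightarrow> 'b::topological_space"
  shows "(\<lambda>\<omega>. g (\<omega> j)) \<in> borel_measurable (PiM K (\<lambda>k. measure_pmf (mu p k)))"
proof (cases "j \<in> K")
  case True
  show ?thesis
    by (rule measurable_compose[OF measurable_component_singleton[OF True]]) (simp add: measurable_pmf_measure1)
next
  case False
  have "\<And>\<omega>. \<omega> \<in> space (PiM K (\<lambda>k. measure_pmf (mu p k))) \<Longrightarrow> g (\<omega> j) = g undefined"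
    using False by (auto simp: space_PiM PiE_def extensional_def)
  then show ?thesis by (subst measurable_cong[where g="\<lambda>_. g undefined"]) auto
qed

lemma matvec_meas[measurable]:
  fixes F :: "'a \<Rightarrow> real^'n::finite"
  assumes "F \<in> borel_measurable N"
  shows "(\<lambda>w. (A::real^'n^'m::finite) *v F w) \<in> borel_measurable N"
proof -
  have "continuous_on UNIV ((*v) A)"
    by (rule linear_continuous_on) (simp add: matrix_vector_mul_linear linear_linear)
  then show ?thesis
    using measurable_compose[OF assms borel_measurable_continuous_onI] by (simp add: comp_def)
qed

lemma dd_meas: "dd t \<in> borel_measurable (PiM K (\<lambda>k. measure_pmf (mu p k)))"
  unfolding dd_def
  by (intro borel_measurable_scaleR meas_coord)

lemma traj_meas: "traj Ab (\<lambda>x. x) dd s \<in> borel_measurable (PiM K (\<lambda>k. measure_pmf (mu p k)))"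
proof (induction s)
  case 0 then show ?case by simp
next
  case (Suc s)
  show ?case
    by (simp only: traj.simps) (intro borel_measurable_add matvec_meas Suc dd_meas)
qed

lemma dd_restrict: "{3*k, 3*k+1, 3*k+2} \<subseteq> K \<Longrightarrow> dd k (restrict w K) = dd k w"
  by (simp add: dd_def)

lemma traj_restrict: "(\<And>k. k < s \<Longrightarrow> {3*k, 3*k+1, 3*k+2} \<subseteq> K) \<Longrightarrow>
   traj Ab (\<lambda>x. x) dd s (restrict w K) = traj Ab (\<lambda>x. x) dd s w"
  by (induction s) (auto simp: dd_restrict)


abbreviation "GG p t \<equiv> condalg (MM p) Ab (\<lambda>x. x) dd t"
abbreviation "PM p K \<equiv> PiM K (\<lambda>k. measure_pmf (mu p k))"

definition Gen :: "real \<Rightarrow> nat \<Rightarrow> (nat \<Rightarrow> real \<times> (real^'n::finite)) set set" where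
 "Gen p t = {traj Ab (\<lambda>x. x) dd s -` B \<inter> space (MM p) | s B. s \<le> t \<and> B \<in> sets borel}
      \<union> {{w \<in> space (MM p). dd t w \<noteq> 0}}"

lemma MM_PM: "MM p = PM p UNIV" by (simp add: MM_def)

lemma Gen_sets: "Gen p t \<subseteq> sets (MM p)"
proof -
  have "traj Ab (\<lambda>x. x) dd s -` B \<inter> space (MM p) \<in> sets (MM p)" if "B \<in> sets borel" for s and B :: "(real^'n) set"
    using measurable_sets[OF traj_meas[of s UNIV p] that] unfolding MM_PM .
  moreover have "{w \<in> space (MM p). dd t w \<noteq> 0} \<in> sets (MM p)"
    using dd_meas[of t UNIV p] unfolding MM_PM by measurable
  ultimately show ?thesis unfolding Gen_def by blast
qed

lemma sets_GG: "sets (GG p t) = sigma_sets (space (MM p)) (Gen p t)"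
  unfolding condalg_def Gen_def[symmetric]
  by (rule sets_measure_of) (use Gen_sets[of p t] sets.sets_into_space in blast)

lemma space_GG: "space (GG p t) = space (MM p)"
  unfolding condalg_def by (simp add: space_measure_of_conv)

lemma sub_GG: "subalgebra (MM p) (GG p t)"
  unfolding subalgebra_def space_GG sets_GG
  using sets.sigma_sets_subset[OF Gen_sets] by simp

lemma GG_vimage:
  fixes p :: real and t :: nat
  shows "sets (GG p t :: (nat \<Rightarrow> real \<times> (real^'n::finite)) measure) \<subseteq> sets (vimage_algebra (space (MM p)) (\<lambda>\<omega>. restrict \<omega> {..3*t}) (PM p {..3*t}))"
proof -
  let ?Y = "\<lambda>\<omega>::nat \<Rightarrow> real \<times> (real^'n). restrict \<omega> {..3*t}"
  let ?V = "vimage_algebra (space (MM p)) ?Y (PM p {..3*t})"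
  have Ym: "?Y \<in> measurable (MM p) (PM p {..3*t})"
    unfolding MM_PM by (rule measurable_restrict_subset) simp
  then have Yf: "?Y \<in> space (MM p) \<rightarrow> space (PM p {..3*t})" by (simp add: measurable_def)
  have sa: "sigma_algebra (space (MM p)) (sets ?V)"
    using sets.sigma_algebra_axioms[of ?V] by (simp add: space_vimage_algebra)
  have "Gen p t \<subseteq> sets ?V"
  proof
    fix X :: "(nat \<Rightarrow> real \<times> (real^'n)) set" assume "X \<in> Gen p t"
    then consider (a) s and B :: "(real^'n) set" where "X = traj Ab (\<lambda>x. x) dd s -` B \<inter> space (MM p)" "s \<le> t" "B \<in> sets borel"
      | (b) "X = {w \<in> space (MM p). dd t w \<noteq> 0}"
      unfolding Gen_def by blast
    then show "X \<in> sets ?V"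
    proof cases
      case a
      have "X = ?Y -` (traj Ab (\<lambda>x. x) dd s -` B \<inter> space (PM p {..3*t})) \<inter> space (MM p)"
        using a(2) Yf by (auto simp: a(1) traj_restrict[of s "{..3*t}"])
      moreover have "traj Ab (\<lambda>x. x) dd s -` B \<inter> space (PM p {..3*t}) \<in> sets (PM p {..3*t})"
        using measurable_sets[OF traj_meas[of s "{..3*t}" p] a(3)] .
      ultimately show ?thesis unfolding sets_vimage_algebra2[OF Yf] by blast
    next
      case b
      have "X = ?Y -` {\<omega> \<in> space (PM p {..3*t}). Bf (\<omega> (3*t)) \<noteq> 0} \<inter> space (MM p)"
        using Yf by (auto simp: b dd_nz)
      moreover have "{\<omega> \<in> space (PM p {..3*t}). Bf (\<omega> (3*t)) \<noteq> 0} \<in> sets (PM p {..3*t})"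
        using meas_coord[of Bf "3*t" "{..3*t}" p] by measurable
      ultimately show ?thesis unfolding sets_vimage_algebra2[OF Yf] by blast
    qed
  qed
  then show ?thesis unfolding sets_GG by (rule sigma_algebra.sigma_sets_subset[OF sa])
qed

lemma Bf_GG: "(\<lambda>w. Bf (w (3*t))) \<in> borel_measurable (GG p t)"
proof -
  have S: "{w \<in> space (MM p). dd t w \<noteq> 0} \<in> sets (GG p t)"
    unfolding sets_GG Gen_def by (rule sigma_sets.Basic) blast
  have eq: "(\<lambda>w. Bf (w (3*t))) = indicator {w \<in> space (MM p). dd t w \<noteq> 0}"
    by (auto simp: fun_eq_iff space_MM dd_nz Bf_def)
  have ind: "(indicator {w \<in> space (MM p). dd t w \<noteq> 0} :: _ \<Rightarrow> real) \<in> borel_measurable (GG p t)"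
    using borel_measurable_indicator[OF S] .
  show ?thesis by (subst eq) (rule ind)
qed


lemma indep_coords: "prob_space.indep_vars (MM p) (\<lambda>k. measure_pmf (mu p k)) (\<lambda>k w. w k) UNIV"
proof -
  interpret prob_space "MM p" by (rule prob_MM)
  have rv: "random_variable (measure_pmf (mu p i)) (\<lambda>w. w i)" for i
    unfolding MM_def by (rule measurable_component_singleton) simp
  have d: "distr (MM p) (measure_pmf (mu p i)) (\<lambda>x. x i) = measure_pmf (mu p i)" for i
    unfolding MM_def by (rule distr_PiM_component) (simp_all add: prob_space_measure_pmf)
  have "distr (MM p) (PM p UNIV) (\<lambda>x. \<lambda>i\<in>UNIV. x i) = PM p UNIV"
  proof -
    have "distr (MM p) (PM p UNIV) (\<lambda>x. \<lambda>i\<in>UNIV. x i) = distr (PM p UNIV) (PM p UNIV) (\<lambda>x. x)"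
      unfolding MM_def by (rule distr_cong) auto
    then show ?thesis by (simp add: distr_id)
  qed
  also have "\<dots> = (\<Pi>\<^sub>M i\<in>UNIV. distr (MM p) (measure_pmf (mu p i)) (\<lambda>x. x i))"
    by (simp add: d)
  finally show ?thesis
    by (subst indep_vars_iff_distr_eq_PiM[OF _ rv]) simp_all
qed

lemma int_coord:
  fixes g :: "real \<times> (real^'n::finite) \<Rightarrow> real"
  shows "(\<integral>w. g (w k) \<partial>(MM p :: (nat \<Rightarrow> real \<times> (real^'n)) measure)) = (\<integral>z. g z \<partial>measure_pmf (mu p k))"
proof -
  have d: "distr (MM p) (measure_pmf (mu p k)) (\<lambda>x. x k) = measure_pmf (mu p k)"
    unfolding MM_def by (rule distr_PiM_component) (simp_all add: prob_space_measure_pmf)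
  have rv: "(\<lambda>w. w k) \<in> measurable (MM p) (measure_pmf (mu p k))"
    unfolding MM_def by (rule measurable_component_singleton) simp
  show ?thesis
    by (subst d[symmetric], subst integral_distr[OF rv]) (simp_all add: measurable_pmf_measure1)
qed

lemma meas_coordM:
  fixes g :: "real \<times> (real^'n::finite) \<Rightarrow> 'b::topological_space"
  shows "(\<lambda>\<omega>. g (\<omega> j)) \<in> borel_measurable (MM p)"
  unfolding MM_def by (rule meas_coord)

lemma int_indep2:
  fixes gA gB :: "real \<times> (real^'n::finite) \<Rightarrow> real"
  assumes "a \<noteq> b" and b1: "\<And>z. \<bar>gA z\<bar> \<le> cA" and b2: "\<And>z. \<bar>gB z\<bar> \<le> cB"
  shows "(\<integral>w. gA (w a) * gB (w b) \<partial>(MM p :: (nat \<Rightarrow> real \<times> (real^'n)) measure))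
        = (\<integral>z. gA z \<partial>measure_pmf (mu p a)) * (\<integral>z. gB z \<partial>measure_pmf (mu p b))"
proof -
  interpret prob_space "MM p" by (rule prob_MM)
  have iv: "indep_var (PM p {a}) (\<lambda>\<omega>. restrict \<omega> {a}) (PM p {b}) (\<lambda>\<omega>. restrict \<omega> {b})"
    using indep_var_restrict[OF indep_coords[of p], of "{a}" "{b}"] assms(1) by simp
  have m1: "(\<lambda>\<omega>. gA (\<omega> a)) \<in> borel_measurable (PM p {a})" by (rule meas_coord)
  have m2: "(\<lambda>\<omega>. gB (\<omega> b)) \<in> borel_measurable (PM p {b})" by (rule meas_coord)
  have iv2: "indep_var borel (\<lambda>w. gA (w a)) borel (\<lambda>w. gB (w b))"
    using indep_var_compose[OF iv m1 m2] by (simp add: comp_def)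
  have i1: "integrable (MM p) (\<lambda>w. gA (w a))"
    by (rule integrable_const_bound[where B=cA]) (simp_all add: b1 meas_coordM)
  have i2: "integrable (MM p) (\<lambda>w. gB (w b))"
    by (rule integrable_const_bound[where B=cB]) (simp_all add: b2 meas_coordM)
  show ?thesis
    using indep_var_lebesgue_integral[OF iv2 i1 i2] by (simp add: int_coord)
qed

lemma cexp_fut:
  fixes g :: "real \<times> (real^'n::finite) \<Rightarrow> real \<times> (real^'n) \<Rightarrow> real"
  assumes hm: "(\<lambda>\<omega>. g (\<omega> (3*t+1)) (\<omega> (3*t+2))) \<in> borel_measurable (PM p {3*t+1, 3*t+2})"
  and bd: "\<And>z1 z2. \<bar>g z1 z2\<bar> \<le> c"
  shows "AE w in MM p. real_cond_exp (MM p) (GG p t) (\<lambda>w. g (w (3*t+1)) (w (3*t+2))) w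
           = (\<integral>w. g (w (3*t+1)) (w (3*t+2)) \<partial>MM p)"
proof -
  interpret prob_space "MM p" by (rule prob_MM)
  let ?B = "{3*t+1, 3*t+2}"
  let ?h = "\<lambda>\<omega>. g (\<omega> (3*t+1)) (\<omega> (3*t+2))"
  have iv: "indep_var (PM p {..3*t}) (\<lambda>\<omega>. restrict \<omega> {..3*t}) (PM p ?B) (\<lambda>\<omega>. restrict \<omega> ?B)"
    using indep_var_restrict[OF indep_coords[of p], of "{..3*t}" ?B] by auto
  have Ym: "(\<lambda>\<omega>. restrict \<omega> {..3*t}) \<in> measurable (MM p) (PM p {..3*t})"
    unfolding MM_PM by (rule measurable_restrict_subset) simp
  have Zm: "(\<lambda>\<omega>. restrict \<omega> ?B) \<in> measurable (MM p) (PM p ?B)"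
    unfolding MM_PM by (rule measurable_restrict_subset) simp
  have eq: "(\<lambda>w. ?h (restrict w ?B)) = (\<lambda>w. g (w (3*t+1)) (w (3*t+2)))"
    by (simp add: fun_eq_iff)
  have gm: "(\<lambda>w. g (w (3*t+1)) (w (3*t+2))) \<in> borel_measurable (MM p)"
  proof -
    have "(\<lambda>w. g (restrict w ?B (3*t+1)) (restrict w ?B (3*t+2))) = (\<lambda>w. g (w (3*t+1)) (w (3*t+2)))"
      by (simp add: fun_eq_iff)
    then show ?thesis using measurable_compose[OF Zm hm] by (simp only: comp_def)
  qed
  have hint: "integrable (MM p) (\<lambda>w. ?h (restrict w ?B))"
    unfolding eq
    by (rule integrable_const_bound[where B=c]) (simp add: bd, rule gm)
  note cA = cexp_indep[OF prob_MM sub_GG]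
  note cB = cA[OF iv]
  note c3 = cB[OF GG_vimage]
  note c4 = c3[OF Ym Zm]
  note c5 = c4[OF hm]
  note c6 = c5[OF hint]
  show ?thesis
    using c6 unfolding eq .
qed


lemma mu1: "mu p (3*t+1) = map_pmf (\<lambda>b. (if b then 1 else -1, 0)) (bernoulli_pmf (1/2))"
proof -
  have "(3*t+1) mod 3 = (1::nat)" by presburger
  then show ?thesis by (simp add: mu_def)
qed
lemma mu2: "mu p (3*t+2) = map_pmf (\<lambda>z. (0, vecf z)) (pmf_of_set UNIV)"
proof -
  have "(3*t+2) mod 3 = (2::nat)" by presburger
  then show ?thesis by (simp add: mu_def)
qed
lemma mu0: "mu p (3*t) = map_pmf (\<lambda>b. (if b then 1 else 0, 0)) (bernoulli_pmf p)"
  by (simp add: mu_def)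

lemma E_S: fixes g :: "real \<Rightarrow> real" shows "(\<integral>z. g (Sf z) \<partial>measure_pmf (mu p (3*t+1) :: (real \<times> (real^'n::finite)) pmf)) = (g 1 + g (-1)) / 2"
  unfolding mu1 by (simp add: integral_map_pmf integral_bernoulli_pmf Sf_def)

lemma Xf_vecf: "Xf (0, vecf z) = vecf z" by (simp add: Xf_def)

lemma card_nb: "card (UNIV :: ('n::finite \<times> bool) set) = 2 * CARD('n)"
  by (simp add: card_UNIV_bool)

lemma E_X: fixes g :: "real^'n::finite \<Rightarrow> real" shows "(\<integral>z. g (Xf z) \<partial>measure_pmf (mu p (3*t+2) :: (real \<times> (real^'n::finite)) pmf))
   = (\<Sum>k\<in>UNIV. g (axis k 1) + g (- axis k 1)) / (2 * CARD('n))"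
proof -
  have "(\<integral>z. g (Xf z) \<partial>measure_pmf (mu p (3*t+2) :: (real \<times> (real^'n::finite)) pmf))
      = (\<Sum>z\<in>UNIV. g (vecf z)) / card (UNIV :: ('n \<times> bool) set)"
    unfolding mu2 by (simp add: integral_map_pmf integral_pmf_of_set Xf_vecf)
  also have "(\<Sum>z\<in>UNIV. g (vecf z)) = (\<Sum>k\<in>UNIV. \<Sum>b\<in>UNIV. g (vecf (k, b)))"
    by (simp add: sum.cartesian_product UNIV_Times_UNIV[symmetric] del: UNIV_Times_UNIV)
  also have "\<dots> = (\<Sum>k\<in>UNIV. g (axis k 1) + g (- axis k 1))"
    by (simp add: UNIV_bool vecf_def add.commute)
  finally show ?thesis by (simp add: card_nb)
qed

lemma E_Xi: "(\<integral>z. Xf z $ i \<partial>measure_pmf (mu p (3*t+2) :: (real \<times> (real^'n::finite)) pmf)) = 0"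
proof -
  have s0: "(\<Sum>k\<in>UNIV. (axis k 1::real^'n) $ i + (- axis k 1::real^'n) $ i) = 0"
    by (intro sum.neutral ballI) (simp add: axis_def)
  have "(\<integral>z. Xf z $ i \<partial>measure_pmf (mu p (3*t+2) :: (real \<times> (real^'n::finite)) pmf)) = (\<Sum>k\<in>UNIV. (axis k 1::real^'n) $ i + (- axis k 1::real^'n) $ i) / (2 * CARD('n))"
    by (rule E_X[where g="\<lambda>v. v $ i" and p=p and t=t])
  then show ?thesis unfolding s0 by simp
qed

lemma E_XiXj: "(\<integral>z. Xf z $ i * Xf z $ j \<partial>measure_pmf (mu p (3*t+2) :: (real \<times> (real^'n::finite)) pmf))
    = (if i = j then 1 / CARD('n) else 0)"
proof -
  have "(\<Sum>k\<in>UNIV. (axis k 1 :: real^'n) $ i * axis k 1 $ j + (- axis k 1 :: real^'n) $ i * (- axis k 1) $ j)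
        = (\<Sum>k\<in>UNIV. if k = i \<and> k = j then 2 else 0)"
    by (rule sum.cong) (auto simp: axis_def)
  also have "\<dots> = (if i = j then 2 else 0)"
  proof (cases "i = j")
    case False
    then have "\<And>k. (if k = i \<and> k = j then 2 else 0) = (0::real)" by auto
    then show ?thesis using False by simp
  qed simp
  finally show ?thesis
    by (subst E_X[where g = "\<lambda>v. v $ i * v $ j"]) simp
qed


lemma abs_Xf: "\<bar>Xf z $ i\<bar> \<le> 1"
  using component_le_norm_cart[of "Xf z" i] norm_Xf[of z] by simp
lemma abs_Sf: "\<bar>Sf z\<bar> \<le> 1" by (simp add: Sf_def)

lemma cexp_const:
  "AE w in MM p. real_cond_exp (MM p) (GG p t) (\<lambda>w. c) w = c"
proof -
  interpret prob_space "MM p" by (rule prob_MM)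
  interpret finite_measure_subalgebra "MM p" "GG p t" by unfold_locales (rule sub_GG)
  show ?thesis by (rule real_cond_exp_F_meas) simp_all
qed

lemma A3_entry:
  fixes x :: "real^'n::finite"
  shows "AE w in (MM p :: (nat \<Rightarrow> real \<times> (real^'n)) measure).
     real_cond_exp (MM p :: (nat \<Rightarrow> real \<times> (real^'n)) measure) (GG p t) (\<lambda>w. (x + dd t w) $ i * (x + dd t w) $ j) w
       = x$i*x$j + Bf (w (3*t)) * (if i = j then 1 / CARD('n) else 0)"
proof -
  interpret prob_space "(MM p :: (nat \<Rightarrow> real \<times> (real^'n)) measure)" by (rule prob_MM)
  interpret finite_measure_subalgebra "(MM p :: (nat \<Rightarrow> real \<times> (real^'n)) measure)" "GG p t" by unfold_locales (rule sub_GG)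
  define g where "g z1 z2 = x$i * (Sf z1 * Xf z2 $ j) + x$j * (Sf z1 * Xf z2 $ i) + Xf z2 $ i * Xf z2 $ j" for z1 z2 :: "real \<times> (real^'n)"
  define H where "H w = g (w (3*t+1)) (w (3*t+2))" for w :: "nat \<Rightarrow> real \<times> (real^'n)"
  have gb: "\<bar>g z1 z2\<bar> \<le> \<bar>x$i\<bar> + \<bar>x$j\<bar> + 1" for z1 z2
  proof -
    have "\<bar>g z1 z2\<bar> \<le> \<bar>x$i\<bar> * (\<bar>Sf z1\<bar> * \<bar>Xf z2 $ j\<bar>) + \<bar>x$j\<bar> * (\<bar>Sf z1\<bar> * \<bar>Xf z2 $ i\<bar>) + \<bar>Xf z2 $ i\<bar> * \<bar>Xf z2 $ j\<bar>"
      unfolding g_def by (simp add: abs_mult[symmetric]) 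
    also have "\<dots> \<le> \<bar>x$i\<bar> * (1 * 1) + \<bar>x$j\<bar> * (1 * 1) + 1 * 1"
      by (intro add_mono mult_mono abs_Xf abs_Sf mult_nonneg_nonneg) simp_all
    finally show ?thesis by simp
  qed
  have fe: "(\<lambda>w. (x + dd t w) $ i * (x + dd t w) $ j) = (\<lambda>w. x$i*x$j + Bf (w (3*t)) * H w)"
  proof
    fix w :: "nat \<Rightarrow> real \<times> (real^'n)"
    let ?s = "Sf (w (3*t+1))" and ?u = "Xf (w (3*t+2)) $ i" and ?v = "Xf (w (3*t+2)) $ j"
    have ss: "?s * ?s = 1" by (rule Sf_sq)
    have alg: "(x$i + ?s*?u) * (x$j + ?s*?v) = x$i*x$j + (x$i*(?s*?v) + x$j*(?s*?u) + (?s*?s)*(?u*?v))"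
      by algebra
    show "(x + dd t w) $ i * (x + dd t w) $ j = x$i*x$j + Bf (w (3*t)) * H w"
      using Bf_01[of "w (3*t)"]
    proof
      assume "Bf (w (3*t)) = 0" then show ?thesis by (simp add: dd_def)
    next
      assume B1: "Bf (w (3*t)) = 1"
      have "(x + dd t w) $ i * (x + dd t w) $ j = (x$i + ?s*?u) * (x$j + ?s*?v)"
        by (simp add: dd_def B1)
      also have "\<dots> = x$i*x$j + H w" unfolding alg ss by (simp add: H_def g_def)
      finally show ?thesis by (simp add: B1)
    qed
  qed
  have Hm: "H \<in> borel_measurable (MM p :: (nat \<Rightarrow> real \<times> (real^'n)) measure)"
    unfolding H_def g_def
    by (intro borel_measurable_add borel_measurable_times borel_measurable_const meas_coordM)
  have Hint: "integrable (MM p :: (nat \<Rightarrow> real \<times> (real^'n)) measure) H"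
    by (rule integrable_const_bound[where B="\<bar>x$i\<bar> + \<bar>x$j\<bar> + 1"]) (simp add: H_def gb, rule Hm)
  have gm: "(\<lambda>\<omega>. g (\<omega> (3*t+1)) (\<omega> (3*t+2))) \<in> borel_measurable (PM p {3*t+1, 3*t+2})"
    unfolding g_def
    by (intro borel_measurable_add borel_measurable_times borel_measurable_const meas_coord)
  have ceH: "AE w in (MM p :: (nat \<Rightarrow> real \<times> (real^'n)) measure). real_cond_exp (MM p :: (nat \<Rightarrow> real \<times> (real^'n)) measure) (GG p t) H w = (\<integral>w. H w \<partial>(MM p :: (nat \<Rightarrow> real \<times> (real^'n)) measure))"
    unfolding H_def by (rule cexp_fut[OF gm gb])
  have i1: "(\<integral>w. Sf (w (3*t+1)) * Xf (w (3*t+2)) $ k \<partial>(MM p :: (nat \<Rightarrow> real \<times> (real^'n)) measure)) = 0" for k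
  proof -
    have "(\<integral>w. Sf (w (3*t+1)) * Xf (w (3*t+2)) $ k \<partial>(MM p :: (nat \<Rightarrow> real \<times> (real^'n)) measure))
        = (\<integral>z. Sf z \<partial>measure_pmf (mu p (3*t+1) :: (real \<times> (real^'n)) pmf)) * (\<integral>z. Xf z $ k \<partial>measure_pmf (mu p (3*t+2)))"
      using int_indep2[where gA=Sf and gB="\<lambda>z. Xf z $ k" and a="3*t+1" and b="3*t+2" and cA=1 and cB=1 and p=p] by (simp add: abs_Sf abs_Xf)
    then show ?thesis using E_Xi[where i=k and p=p and t=t] by simp
  qed
  have intSX: "integrable (MM p :: (nat \<Rightarrow> real \<times> (real^'n)) measure) (\<lambda>w. Sf (w (3*t+1)) * Xf (w (3*t+2)) $ k)" for k
    by (rule integrable_const_bound[where B=1])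
       (simp add: abs_mult abs_Sf abs_Xf mult_le_one, intro borel_measurable_times meas_coordM)
  have intXX: "integrable (MM p :: (nat \<Rightarrow> real \<times> (real^'n)) measure) (\<lambda>w. Xf (w (3*t+2)) $ i * Xf (w (3*t+2)) $ j)"
    by (rule integrable_const_bound[where B=1])
       (simp add: abs_mult abs_Xf mult_le_one, intro borel_measurable_times meas_coordM)
  have EH: "(\<integral>w. H w \<partial>(MM p :: (nat \<Rightarrow> real \<times> (real^'n)) measure)) = (if i = j then 1 / CARD('n) else 0)"
  proof -
    have "(\<integral>w. H w \<partial>(MM p :: (nat \<Rightarrow> real \<times> (real^'n)) measure)) = x$i * (\<integral>w. Sf (w (3*t+1)) * Xf (w (3*t+2)) $ j \<partial>(MM p :: (nat \<Rightarrow> real \<times> (real^'n)) measure))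
        + x$j * (\<integral>w. Sf (w (3*t+1)) * Xf (w (3*t+2)) $ i \<partial>(MM p :: (nat \<Rightarrow> real \<times> (real^'n)) measure))
        + (\<integral>w. Xf (w (3*t+2)) $ i * Xf (w (3*t+2)) $ j \<partial>(MM p :: (nat \<Rightarrow> real \<times> (real^'n)) measure))"
      unfolding H_def g_def using intSX intXX by simp
    also have "\<dots> = (\<integral>w. Xf (w (3*t+2)) $ i * Xf (w (3*t+2)) $ j \<partial>(MM p :: (nat \<Rightarrow> real \<times> (real^'n)) measure))"
      using i1[of i] i1[of j] by simp
    also have "\<dots> = (if i = j then 1 / CARD('n) else 0)"
      using int_coord[where g="\<lambda>z. Xf z $ i * Xf z $ j" and k="3*t+2" and p=p] E_XiXj[where i=i and j=j and p=p and t=t] by simp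
    finally show ?thesis .
  qed
  have Bm: "(\<lambda>w. Bf (w (3*t))) \<in> borel_measurable (GG p t)" by (rule Bf_GG)
  have intBH: "integrable (MM p :: (nat \<Rightarrow> real \<times> (real^'n)) measure) (\<lambda>w. Bf (w (3*t)) * H w)"
    by (rule integrable_const_bound[where B="\<bar>x$i\<bar> + \<bar>x$j\<bar> + 1"])
       (simp add: H_def abs_mult gb Bf_def, intro borel_measurable_times meas_coordM Hm)
  have a1: "AE w in (MM p :: (nat \<Rightarrow> real \<times> (real^'n)) measure). real_cond_exp (MM p :: (nat \<Rightarrow> real \<times> (real^'n)) measure) (GG p t) (\<lambda>w. x$i*x$j + Bf (w (3*t)) * H w) w
       = real_cond_exp (MM p :: (nat \<Rightarrow> real \<times> (real^'n)) measure) (GG p t) (\<lambda>w. x$i*x$j) w + real_cond_exp (MM p :: (nat \<Rightarrow> real \<times> (real^'n)) measure) (GG p t) (\<lambda>w. Bf (w (3*t)) * H w) w"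
    by (rule real_cond_exp_add) (simp_all add: intBH)
  have a2: "AE w in (MM p :: (nat \<Rightarrow> real \<times> (real^'n)) measure). real_cond_exp (MM p :: (nat \<Rightarrow> real \<times> (real^'n)) measure) (GG p t) (\<lambda>w. Bf (w (3*t)) * H w) w = Bf (w (3*t)) * real_cond_exp (MM p :: (nat \<Rightarrow> real \<times> (real^'n)) measure) (GG p t) H w"
    by (rule real_cond_exp_mult[OF Bm Hm intBH])
  have a3: "AE w in (MM p :: (nat \<Rightarrow> real \<times> (real^'n)) measure). real_cond_exp (MM p :: (nat \<Rightarrow> real \<times> (real^'n)) measure) (GG p t) (\<lambda>w. x$i*x$j) w = x$i*x$j"
    by (rule cexp_const)
  show ?thesis
    unfolding fe using a1 a2 a3 ceH by eventually_elim (simp add: EH)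
qed


lemma cexp_1:
  fixes g :: "real \<times> (real^'n::finite) \<Rightarrow> real"
  assumes bd: "\<And>z. \<bar>g z\<bar> \<le> c"
  shows "AE w in (MM p :: (nat \<Rightarrow> real \<times> (real^'n)) measure).
     real_cond_exp (MM p) (GG p t) (\<lambda>w. g (w (3*t+1))) w = (\<integral>z. g z \<partial>measure_pmf (mu p (3*t+1)))"
proof -
  have hm: "(\<lambda>\<omega>. g (\<omega> (3*t+1))) \<in> borel_measurable (PM p {3*t+1, 3*t+2})" by (rule meas_coord)
  have "AE w in (MM p :: (nat \<Rightarrow> real \<times> (real^'n)) measure).
     real_cond_exp (MM p) (GG p t) (\<lambda>w. (\<lambda>z1 z2. g z1) (w (3*t+1)) (w (3*t+2))) w
       = (\<integral>w. (\<lambda>z1 z2. g z1) (w (3*t+1)) (w (3*t+2)) \<partial>(MM p :: (nat \<Rightarrow> real \<times> (real^'n)) measure))"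
    by (rule cexp_fut[where c=c]) (use hm bd in simp_all)
  then show ?thesis by (simp add: int_coord)
qed

lemma cexp_2:
  fixes g :: "real \<times> (real^'n::finite) \<Rightarrow> real"
  assumes bd: "\<And>z. \<bar>g z\<bar> \<le> c"
  shows "AE w in (MM p :: (nat \<Rightarrow> real \<times> (real^'n)) measure).
     real_cond_exp (MM p) (GG p t) (\<lambda>w. g (w (3*t+2))) w = (\<integral>z. g z \<partial>measure_pmf (mu p (3*t+2)))"
proof -
  have hm: "(\<lambda>\<omega>. g (\<omega> (3*t+2))) \<in> borel_measurable (PM p {3*t+1, 3*t+2})" by (rule meas_coord)
  have "AE w in (MM p :: (nat \<Rightarrow> real \<times> (real^'n)) measure).
     real_cond_exp (MM p) (GG p t) (\<lambda>w. (\<lambda>z1 z2. g z2) (w (3*t+1)) (w (3*t+2))) w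
       = (\<integral>w. (\<lambda>z1 z2. g z2) (w (3*t+1)) (w (3*t+2)) \<partial>(MM p :: (nat \<Rightarrow> real \<times> (real^'n)) measure))"
    by (rule cexp_fut[where c=c]) (use hm bd in simp_all)
  then show ?thesis by (simp add: int_coord)
qed

lemma cexp_12:
  fixes gA gB :: "real \<times> (real^'n::finite) \<Rightarrow> real"
  assumes bA: "\<And>z. \<bar>gA z\<bar> \<le> 1" and bB: "\<And>z. \<bar>gB z\<bar> \<le> 1"
  shows "AE w in (MM p :: (nat \<Rightarrow> real \<times> (real^'n)) measure).
     real_cond_exp (MM p) (GG p t) (\<lambda>w. gA (w (3*t+1)) * gB (w (3*t+2))) w
       = (\<integral>z. gA z \<partial>measure_pmf (mu p (3*t+1))) * (\<integral>z. gB z \<partial>measure_pmf (mu p (3*t+2)))"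
proof -
  have hm: "(\<lambda>\<omega>. gA (\<omega> (3*t+1)) * gB (\<omega> (3*t+2))) \<in> borel_measurable (PM p {3*t+1, 3*t+2})"
    by (intro borel_measurable_times meas_coord)
  have b: "\<bar>gA z1 * gB z2\<bar> \<le> 1" for z1 z2
    using bA[of z1] bB[of z2] by (simp add: abs_mult mult_le_one)
  have "AE w in (MM p :: (nat \<Rightarrow> real \<times> (real^'n)) measure).
     real_cond_exp (MM p) (GG p t) (\<lambda>w. (\<lambda>z1 z2. gA z1 * gB z2) (w (3*t+1)) (w (3*t+2))) w
       = (\<integral>w. (\<lambda>z1 z2. gA z1 * gB z2) (w (3*t+1)) (w (3*t+2)) \<partial>(MM p :: (nat \<Rightarrow> real \<times> (real^'n)) measure))"
    by (rule cexp_fut[where c=1]) (use hm b in simp_all)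
  moreover have "(\<integral>w. gA (w (3*t+1)) * gB (w (3*t+2)) \<partial>(MM p :: (nat \<Rightarrow> real \<times> (real^'n)) measure))
     = (\<integral>z. gA z \<partial>measure_pmf (mu p (3*t+1))) * (\<integral>z. gB z \<partial>measure_pmf (mu p (3*t+2)))"
    by (rule int_indep2[where cA=1 and cB=1]) (simp_all add: bA bB)
  ultimately show ?thesis by simp
qed


lemma Smult: "(\<chi> i j. x$i*x$j + (if i = j then c else 0)) *v v = (x \<bullet> v) *\<^sub>R x + c *\<^sub>R (v::real^'n::finite)"
proof -
  have "(\<Sum>j\<in>UNIV. (x $ i * x $ j + (if i = j then c else 0)) * v $ j) = x$i * (\<Sum>j\<in>UNIV. x$j * v$j) + c * v$i" for i
  proof -
    have "(\<Sum>j\<in>UNIV. (x $ i * x $ j + (if i = j then c else 0)) * v $ j)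
        = (\<Sum>j\<in>UNIV. x$i * (x$j * v$j) + (if i = j then c * v$j else 0))"
      by (rule sum.cong) (auto simp: algebra_simps)
    also have "\<dots> = x$i * (\<Sum>j\<in>UNIV. x$j * v$j) + c * v$i"
      by (simp add: sum.distrib sum_distrib_left)
    finally show ?thesis .
  qed
  then show ?thesis
    by (simp add: vec_eq_iff matrix_vector_mult_def inner_vec_def mult.commute)
qed

lemma lmin:
  fixes x :: "real^'n::finite"
  assumes c: "c > 0"
  shows "lambda_min (\<chi> i j. x$i*x$j + (if i = j then c else 0)) \<ge> c"
proof -
  let ?S = "(\<chi> i j. x$i*x$j + (if i = j then c else 0)) :: real^'n^'n"
  let ?E = "{mu. \<exists>v. v \<noteq> 0 \<and> ?S *v v = mu *\<^sub>R v}"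
  have ev: "mu \<ge> c \<and> (mu = c \<or> mu = x \<bullet> x + c)" if "mu \<in> ?E" for mu
  proof -
    from that obtain v where v: "v \<noteq> 0" "(x \<bullet> v) *\<^sub>R x + c *\<^sub>R v = mu *\<^sub>R v"
      by (auto simp: Smult)
    have vv: "v \<bullet> v > 0" using v(1) by simp
    have "((x \<bullet> v) *\<^sub>R x + c *\<^sub>R v) \<bullet> v = (mu *\<^sub>R v) \<bullet> v" using v(2) by simp
    then have e1: "(x \<bullet> v) * (x \<bullet> v) + c * (v \<bullet> v) = mu * (v \<bullet> v)"
      by (simp only: inner_add_left inner_scaleR_left)
    have "(x \<bullet> v) * (x \<bullet> v) \<ge> 0" by simp
    then have "c * (v \<bullet> v) \<le> mu * (v \<bullet> v)" using e1 by linarith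
    then have ge: "c \<le> mu" using vv by simp
    have "mu = c \<or> mu = x \<bullet> x + c"
    proof (cases "x \<bullet> v = 0")
      case True
      then have "c *\<^sub>R v = mu *\<^sub>R v" using v(2) by simp
      then have "(c - mu) *\<^sub>R v = 0" by (simp add: algebra_simps)
      then show ?thesis using v(1) by simp
    next
      case False
      have "((x \<bullet> v) *\<^sub>R x + c *\<^sub>R v) \<bullet> x = (mu *\<^sub>R v) \<bullet> x" using v(2) by simp
      then have "(x \<bullet> v) * (x \<bullet> x) + c * (v \<bullet> x) = mu * (v \<bullet> x)"
        by (simp only: inner_add_left inner_scaleR_left)
      then have "(x \<bullet> v) * (x \<bullet> x) + c * (x \<bullet> v) = mu * (x \<bullet> v)"
        by (simp only: inner_commute[of v x])
      then have "(x \<bullet> v) * (x \<bullet> x + c - mu) = 0" by (simp add: algebra_simps)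
      then show ?thesis using False by simp
    qed
    with ge show ?thesis by simp
  qed
  have fin: "finite ?E"
    by (rule finite_subset[of _ "{c, x \<bullet> x + c}"]) (use ev in auto)
  have ne: "?E \<noteq> {}"
  proof (cases "x = 0")
    case True
    have e: "?S *v axis undefined 1 = c *\<^sub>R axis undefined 1" by (subst Smult) (simp add: True)
    have nz: "axis undefined 1 \<noteq> (0::real^'n)" by (simp add: axis_eq_0_iff)
    have "c \<in> ?E" using e nz by blast
    then show ?thesis by blast
  next
    case False
    have "?S *v x = (x \<bullet> x + c) *\<^sub>R x" by (subst Smult) (simp add: algebra_simps)
    then have "x \<bullet> x + c \<in> ?E" using False by blast
    then show ?thesis by blast
  qed
  show ?thesis
    unfolding lambda_min_def using fin ne ev by (simp add: Min_ge_iff)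
qed


lemma sinh_le: assumes "(x::real) \<ge> 0" shows "sinh x \<le> x * cosh x"
proof -
  have "(\<lambda>x. x * cosh x - sinh x) 0 \<le> (\<lambda>x. x * cosh x - sinh x) x"
  proof (rule DERIV_nonneg_imp_nondecreasing[OF assms])
    fix y :: real assume y: "0 \<le> y" "y \<le> x"
    show "\<exists>d. ((\<lambda>x. x * cosh x - sinh x) has_real_derivative d) (at y) \<and> 0 \<le> d"
      by (rule exI[of _ "y * sinh y"]) (use y in \<open>auto intro!: derivative_eq_intros\<close>)
  qed
  then show ?thesis by simp
qed

lemma lncosh_le: assumes "(x::real) \<ge> 0" shows "ln (cosh x) \<le> x^2/2"
proof -
  have "(\<lambda>x. x^2/2 - ln (cosh x)) 0 \<le> (\<lambda>x. x^2/2 - ln (cosh x)) x"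
  proof (rule DERIV_nonneg_imp_nondecreasing[OF assms])
    fix y :: real assume y: "0 \<le> y" "y \<le> x"
    have c: "cosh y > 0" by simp
    have "sinh y / cosh y \<le> y" using sinh_le[OF y(1)] c by (simp add: divide_le_eq)
    then show "\<exists>d. ((\<lambda>x. x^2/2 - ln (cosh x)) has_real_derivative d) (at y) \<and> 0 \<le> d"
      by (intro exI[of _ "y - sinh y / cosh y"] conjI) (auto intro!: derivative_eq_intros simp: c)
  qed
  then show ?thesis by simp
qed

lemma cosh_le_exp: "cosh (x::real) \<le> exp (x^2/2)"
proof -
  have "cosh \<bar>x\<bar> \<le> exp (\<bar>x\<bar>^2/2)"
  proof -
    have "cosh \<bar>x\<bar> = exp (ln (cosh \<bar>x\<bar>))" by simp
    also have "\<dots> \<le> exp (\<bar>x\<bar>^2/2)" proof -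
      have "ln (cosh \<bar>x\<bar>) \<le> \<bar>x\<bar>^2/2" by (rule lncosh_le) simp
      then show ?thesis by (simp only: exp_le_cancel_iff)
    qed
    finally show ?thesis .
  qed
  then show ?thesis by (cases "x \<ge> 0") simp_all
qed


lemma outer_mult: "(\<chi> i j. a$i * b$j) *v y = (b \<bullet> y) *\<^sub>R (a::real^'n::finite)"
proof -
  have "(\<Sum>j\<in>UNIV. a$i * b$j * y$j) = a$i * (\<Sum>j\<in>UNIV. b$j * y$j)" for i
    by (simp add: sum_distrib_left mult.assoc)
  then show ?thesis by (simp add: vec_eq_iff matrix_vector_mult_def inner_vec_def)
qed

context
  fixes d :: "nat \<Rightarrow> 'a \<Rightarrow> real^'n::finite" and w :: 'a
  assumes dn: "\<And>t. d t w = 0 \<or> norm (d t w) = 1"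
begin

abbreviation "xx t \<equiv> traj Ab (\<lambda>x. x) d t w"

lemma xx_Suc: "xx (Suc t) = 4 *\<^sub>R xx t + d t w"
  by (simp add: Ab_mult)

lemma grow: "norm (xx (Suc t)) \<ge> 4 * norm (xx t) - 1"
proof -
  have "norm (4 *\<^sub>R xx t) - norm (- d t w) \<le> norm (4 *\<^sub>R xx t - - d t w)"
    by (rule norm_triangle_ineq2)
  then have h: "4 * norm (xx t) - norm (d t w) \<le> norm (xx (Suc t))" by (simp add: xx_Suc Ab_mult)
  moreover have "norm (d t w) \<le> 1" using dn[of t] by auto
  ultimately show ?thesis by linarith
qed

lemma inv: "(xx t = 0 \<and> (\<forall>u<t. xx u = 0)) \<or> (norm (xx t) \<ge> 1 \<and> 2 * (\<Sum>u<t. norm (xx u)) \<le> norm (xx t))"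
proof (induction t)
  case 0 then show ?case by simp
next
  case (Suc t)
  from Suc.IH show ?case
  proof
    assume a: "xx t = 0 \<and> (\<forall>u<t. xx u = 0)"
    then have s: "(\<Sum>u<Suc t. norm (xx u)) = 0" by simp
    have e: "xx (Suc t) = d t w" using a by (simp add: xx_Suc Ab_mult)
    show ?case using dn[of t] a s e less_Suc_eq by auto
  next
    assume a: "norm (xx t) \<ge> 1 \<and> 2 * (\<Sum>u<t. norm (xx u)) \<le> norm (xx t)"
    have "norm (xx (Suc t)) \<ge> 3 * norm (xx t)" using grow[of t] a by linarith
    then show ?case using a by simp
  qed
qed

lemma nz: "k < t \<Longrightarrow> d k w \<noteq> 0 \<Longrightarrow> xx t \<noteq> 0"
proof (induction t)
  case 0 then show ?case by simp
next
  case (Suc t)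
  show ?case
  proof (cases "xx t = 0")
    case False
    then have "norm (xx t) \<ge> 1" using inv[of t] by auto
    then show ?thesis using grow[of t] by auto
  next
    case True
    then have "k = t" using Suc by (metis less_SucE)
    then show ?thesis using True Suc.prems by (simp add: xx_Suc Ab_mult)
  qed
qed

lemma cost_Ab: "cost Ab (\<lambda>x. x) d Ab T w = (\<Sum>t<T. norm (d t w))"
  by (simp add: cost_def)

lemma nonmin:
  assumes T: "T \<ge> 1" and dm: "d (T-1) w \<noteq> 0" and k: "k < T - 1" "d k w \<noteq> 0"
  shows "\<exists>A. cost Ab (\<lambda>x. x) d A T w < cost Ab (\<lambda>x. x) d Ab T w"
proof -
  define m where "m = T - 1"
  have Tm: "T = Suc m" using T by (simp add: m_def)
  have xm: "xx m \<noteq> 0" using nz[OF k[folded m_def]] .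
  let ?N = "xx m \<bullet> xx m"
  have Npos: "?N > 0" using xm by simp
  define A where "A = Ab + (1 / ?N) *\<^sub>R (\<chi> i j. d m w $ i * xx m $ j)"
  define c where "c t = (xx m \<bullet> xx t) / ?N" for t
  have Amult: "A *v v = 4 *\<^sub>R v + ((xx m \<bullet> v) / ?N) *\<^sub>R d m w" for v
    by (simp add: A_def matrix_vector_mult_add_rdistrib scaleR_matrix_vector_assoc[symmetric] outer_mult Ab_mult)
  have trm: "xx (Suc t) - A *v xx t = d t w - c t *\<^sub>R d m w" for t
    by (simp add: xx_Suc Amult c_def Ab_mult)
  have dm1: "norm (d m w) = 1" using dn[of m] dm by (auto simp: m_def)
  have cm: "c m = 1" using Npos by (simp add: c_def)
  have cb: "\<bar>c t\<bar> \<le> norm (xx t) / norm (xx m)" for t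
  proof -
    have "\<bar>xx m \<bullet> xx t\<bar> \<le> norm (xx m) * norm (xx t)" by (rule Cauchy_Schwarz_ineq2)
    moreover have "?N = norm (xx m) * norm (xx m)" by (simp add: power2_norm_eq_inner power2_eq_square[symmetric])
    ultimately show ?thesis using xm
      by (simp add: c_def abs_div field_simps)
  qed
  have sumx: "2 * (\<Sum>u<m. norm (xx u)) \<le> norm (xx m)" using inv[of m] xm by auto
  have "cost Ab (\<lambda>x. x) d A T w = (\<Sum>t<T. norm (d t w - c t *\<^sub>R d m w))"
    by (simp only: cost_def trm)
  also have "\<dots> = (\<Sum>t<m. norm (d t w - c t *\<^sub>R d m w))"
    by (simp add: Tm cm)
  also have "\<dots> \<le> (\<Sum>t<m. norm (d t w) + norm (xx t) / norm (xx m))"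
  proof (rule sum_mono)
    fix t
    have "norm (d t w - c t *\<^sub>R d m w) \<le> norm (d t w) + norm (c t *\<^sub>R d m w)" by (rule norm_triangle_ineq4)
    also have "norm (c t *\<^sub>R d m w) = \<bar>c t\<bar>" using dm1 by simp
    finally show "norm (d t w - c t *\<^sub>R d m w) \<le> norm (d t w) + norm (xx t) / norm (xx m)"
      using cb[of t] by linarith
  qed
  also have "\<dots> = (\<Sum>t<m. norm (d t w)) + (\<Sum>t<m. norm (xx t)) / norm (xx m)"
    by (simp add: sum.distrib sum_divide_distrib)
  also have "\<dots> < (\<Sum>t<m. norm (d t w)) + 1"
  proof -
    have np: "norm (xx m) > 0" using xm by simp
    have "(\<Sum>t<m. norm (xx t)) < norm (xx m)" using sumx np by linarith
    then have "(\<Sum>t<m. norm (xx t)) / norm (xx m) < 1" using np by (simp add: divide_less_eq)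
    then show ?thesis by linarith
  qed
  also have "\<dots> = cost Ab (\<lambda>x. x) d Ab T w"
    by (simp add: cost_Ab Tm dm1)
  finally show ?thesis by blast
qed

end


lemma prob_coord:
  "measure (MM p :: (nat \<Rightarrow> real \<times> (real^'n::finite)) measure) ((\<lambda>w. w i) -` S \<inter> space (MM p))
     = measure (measure_pmf (mu p i)) S"
proof -
  have d: "distr (MM p :: (nat \<Rightarrow> real \<times> (real^'n::finite)) measure) (measure_pmf (mu p i)) (\<lambda>x. x i) = measure_pmf (mu p i)"
    unfolding MM_def by (rule distr_PiM_component) (simp_all add: prob_space_measure_pmf)
  have rv: "(\<lambda>w. w i) \<in> measurable (MM p :: (nat \<Rightarrow> real \<times> (real^'n::finite)) measure) (measure_pmf (mu p i))"
    unfolding MM_def by (rule measurable_component_singleton) simp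
  show ?thesis
    using measure_distr[OF rv, of S] by (simp add: d)
qed

lemma coordprob:
  assumes J: "finite J" "J \<noteq> {}"
  shows "measure (MM p :: (nat \<Rightarrow> real \<times> (real^'n::finite)) measure) (\<Inter>j\<in>J. (\<lambda>w. w (3*j)) -` S j \<inter> space (MM p))
     = (\<Prod>j\<in>J. measure (measure_pmf (mu p (3*j))) (S j))"
proof -
  interpret prob_space "MM p :: (nat \<Rightarrow> real \<times> (real^'n::finite)) measure" by (rule prob_MM)
  let ?f = "\<lambda>j::nat. 3*j"
  have inj: "inj_on ?f J" by (auto simp: inj_on_def)
  have "prob (\<Inter>i\<in>?f ` J. (\<lambda>w. w i) -` S (i div 3) \<inter> space (MM p))
      = (\<Prod>i\<in>?f ` J. prob ((\<lambda>w. w i) -` S (i div 3) \<inter> space (MM p)))"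
    by (rule indep_varsD[OF indep_coords]) (use J in auto)
  moreover have "(\<Inter>i\<in>?f ` J. (\<lambda>w. w i) -` S (i div 3) \<inter> space (MM p)) = (\<Inter>j\<in>J. (\<lambda>w. w (3*j)) -` S j \<inter> space (MM p))"
    by auto
  moreover have "(\<Prod>i\<in>?f ` J. prob ((\<lambda>w. w i) -` S (i div 3) \<inter> space (MM p))) = (\<Prod>j\<in>J. measure (measure_pmf (mu p (3*j))) (S j))"
    by (simp add: prod.reindex[OF inj] prob_coord)
  ultimately show ?thesis by simp
qed

lemma Bf_iff: "Bf z \<noteq> 0 \<longleftrightarrow> z \<in> {z. fst z = 1}" by (simp add: Bf_def)

lemma meas_one: "measure (measure_pmf (mu p (3*j))) {z. fst z = 1} = p" if "0 \<le> p" "p \<le> 1"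
proof -
  have "(\<lambda>b. (if b then 1 else 0, 0::real^'n::finite)) -` {z. fst z = (1::real)} = {True}" by auto
  then show ?thesis using that by (simp add: mu0 measure_map_pmf measure_pmf_single)
qed

lemma meas_zero: "measure (measure_pmf (mu p (3*j))) {z. fst z \<noteq> 1} = 1 - p" if "0 \<le> p" "p \<le> 1"
proof -
  have "(\<lambda>b. (if b then 1 else 0, 0::real^'n::finite)) -` {z. fst z \<noteq> (1::real)} = {False}" by auto
  then show ?thesis using that by (simp add: mu0 measure_map_pmf measure_pmf_single)
qed


lemma F_eq: "{w \<in> space (MM p). dd t w \<noteq> 0} = (\<lambda>w. w (3*t)) -` {z. fst z = 1} \<inter> space (MM p :: (nat \<Rightarrow> real \<times> (real^'n::finite)) measure)"
  by (auto simp: dd_nz Bf_def)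

lemma prob_F: assumes "0 \<le> p" "p \<le> 1"
  shows "measure (MM p :: (nat \<Rightarrow> real \<times> (real^'n::finite)) measure) {w \<in> space (MM p). dd t w \<noteq> 0} = p"
  unfolding F_eq prob_coord using meas_one[OF assms, where j=t] by simp

lemma indepF: assumes "0 \<le> p" "p \<le> 1"
  shows "prob_space.indep_events (MM p :: (nat \<Rightarrow> real \<times> (real^'n::finite)) measure) (\<lambda>t. {w \<in> space (MM p). dd t w \<noteq> 0}) UNIV"
proof -
  interpret prob_space "MM p :: (nat \<Rightarrow> real \<times> (real^'n::finite)) measure" by (rule prob_MM)
  have ev: "{w \<in> space (MM p). dd t w \<noteq> 0} \<in> events" for t
    using dd_meas[of t UNIV p] unfolding MM_PM by measurable
  show ?thesis
    unfolding indep_events_def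
  proof (intro conjI allI impI)
    show "(\<lambda>t. {w \<in> space (MM p). dd t w \<noteq> 0}) ` UNIV \<subseteq> events" using ev by auto
    fix J :: "nat set" assume J: "J \<subseteq> UNIV" "J \<noteq> {}" "finite J"
    have "prob (\<Inter>j\<in>J. {w \<in> space (MM p). dd j w \<noteq> 0}) = prob (\<Inter>j\<in>J. (\<lambda>w. w (3*j)) -` {z. fst z = 1} \<inter> space (MM p :: (nat \<Rightarrow> real \<times> (real^'n::finite)) measure))"
      by (simp only: F_eq)
    also have "\<dots> = (\<Prod>j\<in>J. measure (measure_pmf (mu p (3*j) :: (real \<times> (real^'n)) pmf)) {z. fst z = 1})"
      by (rule coordprob[where S="\<lambda>_. {z. fst z = 1}"]) (use J in auto)
    also have "\<dots> = (\<Prod>j\<in>J. prob {w \<in> space (MM p). dd j w \<noteq> 0})"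
    proof (rule prod.cong[OF refl])
      fix j assume "j \<in> J"
      show "measure (measure_pmf (mu p (3*j) :: (real \<times> (real^'n)) pmf)) {z. fst z = 1} = prob {w \<in> space (MM p). dd j w \<noteq> 0}"
        by (rule trans[OF meas_one[OF assms] prob_F[OF assms, symmetric]])
    qed
    finally show "prob (\<Inter>j\<in>J. {w \<in> space (MM p). dd j w \<noteq> 0}) = (\<Prod>j\<in>J. prob {w \<in> space (MM p). dd j w \<noteq> 0})" .
  qed
qed

lemma cost_meas: "(\<lambda>w. cost Ab (\<lambda>x. x) dd A T w) \<in> borel_measurable (MM p :: (nat \<Rightarrow> real \<times> (real^'n::finite)) measure)"
proof -
  have "(\<lambda>x. norm (traj Ab (\<lambda>x. x) dd (Suc t) x - A *v traj Ab (\<lambda>x. x) dd t x)) \<in> borel_measurable (PM p UNIV :: (nat \<Rightarrow> real \<times> (real^'n::finite)) measure)" for t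
  proof -
    have h1: "(\<lambda>x. traj Ab (\<lambda>x. x) dd (Suc t) x - A *v traj Ab (\<lambda>x. x) dd t x) \<in> borel_measurable (PM p UNIV :: (nat \<Rightarrow> real \<times> (real^'n::finite)) measure)"
      by (intro borel_measurable_diff matvec_meas traj_meas)
    show ?thesis using measurable_compose[OF h1 borel_measurable_norm] .
  qed
  then show ?thesis unfolding cost_def MM_PM by (rule borel_measurable_sum)
qed

lemma cont_mv: "continuous_on UNIV (\<lambda>A::real^'n::finite^'n. A *v y)"
proof -
  have "linear (\<lambda>A::real^'n::finite^'n. A *v y)"
    by (rule linearI) (simp_all add: matrix_vector_mult_add_rdistrib scaleR_matrix_vector_assoc)
  then show ?thesis by (intro linear_continuous_on) (simp add: linear_conv_bounded_linear)
qed

lemma cost_cont: "continuous_on UNIV (\<lambda>A. cost Ab (\<lambda>x. x) dd A T w)"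
  unfolding cost_def by (intro continuous_intros cont_mv)

lemma N_meas:
  "{w \<in> space (MM p). \<not> (\<forall>A. cost Ab (\<lambda>x. x) dd Ab T w \<le> cost Ab (\<lambda>x. x) dd A T w)}
     \<in> sets (MM p :: (nat \<Rightarrow> real \<times> (real^'n::finite)) measure)"
proof -
  obtain D :: "(real^'n^'n) set" where D: "countable D" "\<And>X. open X \<Longrightarrow> X \<noteq> {} \<Longrightarrow> \<exists>d\<in>D. d \<in> X"
    using countable_dense_setE by blast
  have eq: "{w \<in> space (MM p). \<not> (\<forall>A. cost Ab (\<lambda>x. x) dd Ab T w \<le> cost Ab (\<lambda>x. x) dd A T w)}
     = (\<Union>A\<in>D. {w \<in> space (MM p :: (nat \<Rightarrow> real \<times> (real^'n::finite)) measure). cost Ab (\<lambda>x. x) dd A T w < cost Ab (\<lambda>x. x) dd Ab T w})"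
  proof (rule set_eqI iffI)+
    fix w :: "nat \<Rightarrow> real \<times> (real^'n)" assume "w \<in> {w \<in> space (MM p). \<not> (\<forall>A. cost Ab (\<lambda>x. x) dd Ab T w \<le> cost Ab (\<lambda>x. x) dd A T w)}"
    then obtain A where w: "w \<in> space (MM p)" "cost Ab (\<lambda>x. x) dd A T w < cost Ab (\<lambda>x. x) dd Ab T w"
      by (auto simp: not_le)
    let ?X = "{B. cost Ab (\<lambda>x. x) dd B T w < cost Ab (\<lambda>x. x) dd Ab T w}"
    have "open ?X"
      by (rule open_Collect_less) (simp_all add: cost_cont)
    moreover have "?X \<noteq> {}" using w by auto
    ultimately obtain B where "B \<in> D" "B \<in> ?X" using D(2) by blast
    then show "w \<in> (\<Union>A\<in>D. {w \<in> space (MM p). cost Ab (\<lambda>x. x) dd A T w < cost Ab (\<lambda>x. x) dd Ab T w})"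
      using w by auto
  next
    fix w :: "nat \<Rightarrow> real \<times> (real^'n)" assume "w \<in> (\<Union>A\<in>D. {w \<in> space (MM p :: (nat \<Rightarrow> real \<times> (real^'n::finite)) measure). cost Ab (\<lambda>x. x) dd A T w < cost Ab (\<lambda>x. x) dd Ab T w})"
    then show "w \<in> {w \<in> space (MM p). \<not> (\<forall>A. cost Ab (\<lambda>x. x) dd Ab T w \<le> cost Ab (\<lambda>x. x) dd A T w)}"
      by (auto simp: not_le)
  qed
  show ?thesis
    unfolding eq
    by (intro sets.countable_UN'' D(1) borel_measurable_less cost_meas) 
qed


lemma coord_sets: "(\<lambda>w. w i) -` S \<inter> space (MM p) \<in> sets (MM p :: (nat \<Rightarrow> real \<times> (real^'n::finite)) measure)"
proof -
  have rv: "(\<lambda>w. w i) \<in> measurable (MM p :: (nat \<Rightarrow> real \<times> (real^'n::finite)) measure) (measure_pmf (mu p i))"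
    unfolding MM_def by (rule measurable_component_singleton) simp
  show ?thesis by (rule measurable_sets[OF rv]) simp
qed

lemma bound:
  assumes p: "0 < p" "p < 1" and T: "T \<ge> 1"
  shows "measure (MM p :: (nat \<Rightarrow> real \<times> (real^'n::finite)) measure)
      {w \<in> space (MM p). \<not> (\<forall>A. cost Ab (\<lambda>x. x) dd Ab T w \<le> cost Ab (\<lambda>x. x) dd A T w)}
     \<ge> p * (1 - (1 - p) ^ (T - 1))"
proof (cases "T = 1")
  case True then show ?thesis by simp
next
  case False
  interpret prob_space "MM p :: (nat \<Rightarrow> real \<times> (real^'n::finite)) measure" by (rule prob_MM)
  define m where "m = T - 1"
  have m1: "m \<ge> 1" using False T by (simp add: m_def)
  define S where "S j = (if j = m then {z::real \<times> (real^'n). fst z = 1} else {z. fst z \<noteq> 1})" for j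
  define A1 where "A1 = (\<lambda>w. w (3*m)) -` {z::real \<times> (real^'n). fst z = 1} \<inter> space (MM p)"
  define B where "B = (\<Inter>j\<in>{..m}. (\<lambda>w. w (3*j)) -` S j \<inter> space (MM p :: (nat \<Rightarrow> real \<times> (real^'n::finite)) measure))"
  let ?N = "{w \<in> space (MM p). \<not> (\<forall>A. cost Ab (\<lambda>x. x) dd Ab T w \<le> cost Ab (\<lambda>x. x) dd A T w)}"
  have A1s: "A1 \<in> events" unfolding A1_def by (rule coord_sets)
  have Bs: "B \<in> events" unfolding B_def by (intro sets.finite_INT coord_sets) auto
  have BA: "B \<subseteq> A1" unfolding A1_def B_def S_def by auto
  have sub: "A1 - B \<subseteq> ?N"
  proof
    fix w assume w: "w \<in> A1 - B"
    then have wm: "fst (w (3*m)) = 1" "w \<in> space (MM p)" by (auto simp: A1_def)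
    from w obtain j where j: "j \<le> m" "w (3*j) \<notin> S j" by (auto simp: B_def space_MM)
    then have jm: "j < m" using wm by (cases "j = m") (auto simp: S_def)
    then have wj: "fst (w (3*j)) = 1" using j by (auto simp: S_def)
    have d1: "dd m w \<noteq> 0" using wm by (simp add: dd_nz Bf_def)
    have d2: "dd j w \<noteq> 0" using wj by (simp add: dd_nz Bf_def)
    have "\<exists>A. cost Ab (\<lambda>x. x) dd A T w < cost Ab (\<lambda>x. x) dd Ab T w"
      by (rule nonmin[of dd w T j, OF dd_norm T]) (use d1 d2 jm in \<open>simp_all add: m_def\<close>)
    then show "w \<in> ?N" using wm by (auto simp: not_le)
  qed
  have pA1: "prob A1 = p"
  proof -
    have "prob A1 = measure (measure_pmf (mu p (3*m) :: (real \<times> (real^'n)) pmf)) {z. fst z = 1}"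
      unfolding A1_def by (rule prob_coord)
    also have "\<dots> = p" by (rule meas_one) (use p in auto)
    finally show ?thesis .
  qed
  have fm: "measure (measure_pmf (mu p (3*m) :: (real \<times> (real^'n)) pmf)) (S m) = p"
  proof -
    have "S m = {z. fst z = 1}" by (simp add: S_def)
    then show ?thesis by (simp only:) (rule meas_one, use p in auto)
  qed
  have fz: "measure (measure_pmf (mu p (3*j) :: (real \<times> (real^'n)) pmf)) (S j) = 1 - p" if "j < m" for j
  proof -
    have "S j = {z. fst z \<noteq> 1}" using that by (simp add: S_def)
    then show ?thesis by (simp only:) (rule meas_zero, use p in auto)
  qed
  have "prob B = (\<Prod>j\<in>{..m}. measure (measure_pmf (mu p (3*j) :: (real \<times> (real^'n)) pmf)) (S j))"
    unfolding B_def by (rule coordprob) auto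
  also have "\<dots> = (\<Prod>j\<in>insert m {..<m}. measure (measure_pmf (mu p (3*j) :: (real \<times> (real^'n)) pmf)) (S j))"
    by (simp add: lessThan_Suc_atMost[symmetric])
  also have "\<dots> = p * (\<Prod>j\<in>{..<m}. measure (measure_pmf (mu p (3*j) :: (real \<times> (real^'n)) pmf)) (S j))"
    by (simp add: fm)
  also have "(\<Prod>j\<in>{..<m}. measure (measure_pmf (mu p (3*j) :: (real \<times> (real^'n)) pmf)) (S j)) = (\<Prod>j\<in>{..<m}. 1 - p)"
    by (rule prod.cong[OF refl]) (simp add: fz)
  also have "\<dots> = (1 - p) ^ m" by simp
  finally have pB: "prob B = p * (1 - p) ^ m" .
  have "prob (A1 - B) = prob A1 - prob B"
    by (rule finite_measure_Diff[OF A1s Bs BA])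
  also have "\<dots> = p * (1 - (1 - p) ^ (T - 1))"
    by (simp add: pA1 pB m_def algebra_simps)
  finally have eqE: "prob (A1 - B) = p * (1 - (1 - p) ^ (T - 1))" .
  have "prob (A1 - B) \<le> prob ?N"
    by (rule finite_measure_mono[OF sub N_meas])
  then show ?thesis using eqE by simp
qed


lemma A3:
  fixes x :: "real^'n::finite"
  shows "cond_on (MM p :: (nat \<Rightarrow> real \<times> (real^'n)) measure) (\<lambda>w. dd t w \<noteq> 0)
           (\<lambda>w. lambda_min (\<chi> i j. real_cond_exp (MM p) (condalg (MM p) Ab (\<lambda>x. x) dd t)
                   (\<lambda>w. (x + dd t w) $ i * (x + dd t w) $ j) w) \<ge> (sqrt (1 / real CARD('n)))\<^sup>2)"
proof -
  let ?c = "1 / real CARD('n)"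
  have ae: "AE w in (MM p :: (nat \<Rightarrow> real \<times> (real^'n)) measure). \<forall>i\<in>UNIV. \<forall>j\<in>UNIV.
     real_cond_exp (MM p) (GG p t) (\<lambda>w. (x + dd t w) $ i * (x + dd t w) $ j) w
       = x$i*x$j + Bf (w (3*t)) * (if i = j then ?c else 0)"
    by (intro AE_finite_allI A3_entry) simp_all
  show ?thesis unfolding cond_on_def
    using ae
  proof eventually_elim
    case (elim w)
    show ?case
    proof
      assume "dd t w \<noteq> 0"
      then have B1: "Bf (w (3*t)) = 1" using Bf_01[of "w (3*t)"] by (auto simp: dd_nz)
      have "(\<chi> i j. real_cond_exp (MM p) (GG p t) (\<lambda>w. (x + dd t w) $ i * (x + dd t w) $ j) w)
           = (\<chi> i j. x$i*x$j + (if i = j then ?c else 0))"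
        using elim B1 by (simp add: vec_eq_iff)
      moreover have "lambda_min (\<chi> i j. x$i*x$j + (if i = j then ?c else 0)) \<ge> ?c"
        by (rule lmin) simp
      ultimately show "lambda_min (\<chi> i j. real_cond_exp (MM p) (GG p t) (\<lambda>w. (x + dd t w) $ i * (x + dd t w) $ j) w) \<ge> (sqrt ?c)\<^sup>2"
        by simp
    qed
  qed
qed

lemma on_AE: "AE w in M. P w \<Longrightarrow> cond_on M B P"
  unfolding cond_on_def by auto

lemma ind_bound: "\<bar>indicator S z :: real\<bar> \<le> 1" by (simp add: indicator_def)

lemma A6:
  fixes p :: real and t :: nat
  assumes p: "0 \<le> p" "p \<le> 1"
  defines "M \<equiv> (MM p :: (nat \<Rightarrow> real \<times> (real^'n::finite)) measure)"
  shows "\<exists>(ell :: _ \<Rightarrow> real) (hhat :: _ \<Rightarrow> real^'n).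
           ell \<in> borel_measurable M \<and> hhat \<in> borel_measurable M
         \<and> cond_on M (\<lambda>w. dd t w \<noteq> 0) (\<lambda>w. dd t w = ell w *\<^sub>R hhat w)
         \<and> cond_indep_on M (condalg M Ab (\<lambda>x. x) dd t) (\<lambda>w. dd t w \<noteq> 0) ell hhat
         \<and> cond_on M (\<lambda>w. dd t w \<noteq> 0) (\<lambda>w. norm (hhat w) = 1)
         \<and> (\<forall>i. cond_on M (\<lambda>w. dd t w \<noteq> 0)
                 (\<lambda>w. real_cond_exp M (condalg M Ab (\<lambda>x. x) dd t) (\<lambda>w. hhat w $ i) w = 0))
         \<and> integrable M ell
         \<and> cond_on M (\<lambda>w. dd t w \<noteq> 0) (\<lambda>w. real_cond_exp M (condalg M Ab (\<lambda>x. x) dd t) ell w = 0)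
         \<and> (\<forall>s. integrable M (\<lambda>w. exp (s * ell w))
               \<and> cond_on M (\<lambda>w. dd t w \<noteq> 0)
                   (\<lambda>w. real_cond_exp M (condalg M Ab (\<lambda>x. x) dd t) (\<lambda>w. exp (s * ell w)) w
                        \<le> exp (1\<^sup>2 * s\<^sup>2 / 2)))"
proof (intro exI conjI allI)
  have fmM: "finite_measure (MM p :: (nat \<Rightarrow> real \<times> (real^'n::finite)) measure)"
    by (rule finite_measureI) (simp add: prob_space.emeasure_space_1[OF prob_MM])
  let ?ell = "\<lambda>w::nat \<Rightarrow> real \<times> (real^'n). Sf (w (3*t+1))"
  let ?hhat = "\<lambda>w::nat \<Rightarrow> real \<times> (real^'n). Xf (w (3*t+2))"
  show "?ell \<in> borel_measurable M" unfolding M_def by (rule meas_coordM)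
  show "?hhat \<in> borel_measurable M" unfolding M_def by (rule meas_coordM)
  show "cond_on M (\<lambda>w. dd t w \<noteq> 0) (\<lambda>w. dd t w = ?ell w *\<^sub>R ?hhat w)"
    unfolding cond_on_def
  proof (rule AE_I2, rule impI)
    fix w :: "nat \<Rightarrow> real \<times> (real^'n)" assume "dd t w \<noteq> 0"
    then have "Bf (w (3*t)) = 1" using Bf_01[of "w (3*t)"] by (auto simp: dd_nz)
    then show "dd t w = ?ell w *\<^sub>R ?hhat w" by (simp add: dd_def)
  qed
  show "cond_on M (\<lambda>w. dd t w \<noteq> 0) (\<lambda>w. norm (?hhat w) = 1)"
    unfolding cond_on_def by (simp add: norm_Xf)
  show "cond_indep_on M (condalg M Ab (\<lambda>x. x) dd t) (\<lambda>w. dd t w \<noteq> 0) ?ell ?hhat"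
    unfolding cond_indep_on_def
  proof (intro ballI on_AE)
    fix S :: "real set" and U :: "(real^'n) set"
    have e1: "(\<lambda>w. indicator (?ell -` S) w * indicator (?hhat -` U) w :: real)
        = (\<lambda>w. (\<lambda>z. indicator S (Sf z)) (w (3*t+1)) * (\<lambda>z. indicator U (Xf z)) (w (3*t+2)))"
      by (simp add: fun_eq_iff indicator_def)
    have e2: "(indicator (?ell -` S) :: _ \<Rightarrow> real) = (\<lambda>w. (\<lambda>z. indicator S (Sf z)) (w (3*t+1)))"
      by (simp add: fun_eq_iff indicator_def)
    have e3: "(indicator (?hhat -` U) :: _ \<Rightarrow> real) = (\<lambda>w. (\<lambda>z. indicator U (Xf z)) (w (3*t+2)))"
      by (simp add: fun_eq_iff indicator_def)
    have a1: "AE w in M. real_cond_exp M (GG p t) (\<lambda>w. (\<lambda>z. indicator S (Sf z)) (w (3*t+1)) * (\<lambda>z. indicator U (Xf z)) (w (3*t+2))) w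
       = (\<integral>z. (\<lambda>z. indicator S (Sf z)) z \<partial>measure_pmf (mu p (3*t+1) :: (real \<times> (real^'n)) pmf)) * (\<integral>z. (\<lambda>z. indicator U (Xf z)) z \<partial>measure_pmf (mu p (3*t+2) :: (real \<times> (real^'n)) pmf))"
      unfolding M_def by (rule cexp_12) (simp_all add: ind_bound)
    have a2: "AE w in M. real_cond_exp M (GG p t) (\<lambda>w. (\<lambda>z. indicator S (Sf z)) (w (3*t+1))) w
       = (\<integral>z. (\<lambda>z. indicator S (Sf z)) z \<partial>measure_pmf (mu p (3*t+1) :: (real \<times> (real^'n)) pmf))"
      unfolding M_def by (rule cexp_1[where c=1]) (simp add: ind_bound)
    have a3: "AE w in M. real_cond_exp M (GG p t) (\<lambda>w. (\<lambda>z. indicator U (Xf z)) (w (3*t+2))) w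
       = (\<integral>z. (\<lambda>z. indicator U (Xf z)) z \<partial>measure_pmf (mu p (3*t+2) :: (real \<times> (real^'n)) pmf))"
      unfolding M_def by (rule cexp_2[where c=1]) (simp add: ind_bound)
    show "AE w in M. real_cond_exp M (condalg M Ab (\<lambda>x. x) dd t)
              (\<lambda>w. indicator (?ell -` S) w * indicator (?hhat -` U) w) w =
             real_cond_exp M (condalg M Ab (\<lambda>x. x) dd t) (indicator (?ell -` S)) w *
             real_cond_exp M (condalg M Ab (\<lambda>x. x) dd t) (indicator (?hhat -` U)) w"
      unfolding e1 e2 e3 using a1 a2 a3 unfolding M_def by eventually_elim simp
  qed
  show "cond_on M (\<lambda>w. dd t w \<noteq> 0) (\<lambda>w. real_cond_exp M (condalg M Ab (\<lambda>x. x) dd t) (\<lambda>w. ?hhat w $ i) w = 0)" for i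
  proof (rule on_AE)
    have "AE w in M. real_cond_exp M (GG p t) (\<lambda>w. (\<lambda>z. Xf z $ i) (w (3*t+2))) w
       = (\<integral>z. (\<lambda>z. Xf z $ i) z \<partial>measure_pmf (mu p (3*t+2) :: (real \<times> (real^'n)) pmf))"
      unfolding M_def by (rule cexp_2[where c=1]) (simp add: abs_Xf)
    moreover have "(\<integral>z. Xf z $ i \<partial>measure_pmf (mu p (3*t+2) :: (real \<times> (real^'n)) pmf)) = 0"
      by (rule E_Xi)
    ultimately show "AE w in M. real_cond_exp M (condalg M Ab (\<lambda>x. x) dd t) (\<lambda>w. ?hhat w $ i) w = 0"
      by (simp add: M_def)
  qed
  show "integrable M ?ell"
    unfolding M_def by (rule finite_measure.integrable_const_bound[OF fmM, where B=1]) (simp add: abs_Sf, rule meas_coordM)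
  show "cond_on M (\<lambda>w. dd t w \<noteq> 0) (\<lambda>w. real_cond_exp M (condalg M Ab (\<lambda>x. x) dd t) ?ell w = 0)"
  proof (rule on_AE)
    have "AE w in M. real_cond_exp M (GG p t) (\<lambda>w. (\<lambda>z. Sf z) (w (3*t+1))) w
       = (\<integral>z. (\<lambda>z. Sf z) z \<partial>measure_pmf (mu p (3*t+1) :: (real \<times> (real^'n)) pmf))"
      unfolding M_def by (rule cexp_1[where c=1]) (simp add: abs_Sf)
    moreover have "(\<integral>z. Sf z \<partial>measure_pmf (mu p (3*t+1) :: (real \<times> (real^'n)) pmf)) = 0"
      using E_S[where g="\<lambda>x. x" and p=p and t=t] by simp
    ultimately show "AE w in M. real_cond_exp M (condalg M Ab (\<lambda>x. x) dd t) ?ell w = 0"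
      by (simp add: M_def)
  qed
  fix s :: real
  have bd: "\<bar>exp (s * Sf z)\<bar> \<le> exp \<bar>s\<bar>" for z
    by (simp add: Sf_def abs_if)
  have bd': "norm (exp (s * Sf z)) \<le> exp \<bar>s\<bar>" for z
    using bd[of z] by simp
  show "integrable M (\<lambda>w. exp (s * ?ell w))"
    unfolding M_def by (rule finite_measure.integrable_const_bound[OF fmM, where B="exp \<bar>s\<bar>"]) (rule AE_I2, rule bd', rule meas_coordM)
  show "cond_on M (\<lambda>w. dd t w \<noteq> 0) (\<lambda>w. real_cond_exp M (condalg M Ab (\<lambda>x. x) dd t) (\<lambda>w. exp (s * ?ell w)) w \<le> exp (1\<^sup>2 * s\<^sup>2 / 2))"
  proof (rule on_AE)
    have a: "AE w in M. real_cond_exp M (GG p t) (\<lambda>w. (\<lambda>z. exp (s * Sf z)) (w (3*t+1))) w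
       = (\<integral>z. (\<lambda>z. exp (s * Sf z)) z \<partial>measure_pmf (mu p (3*t+1) :: (real \<times> (real^'n)) pmf))"
      unfolding M_def by (rule cexp_1[where c="exp \<bar>s\<bar>"]) (rule bd)
    have b: "(\<integral>z. exp (s * Sf z) \<partial>measure_pmf (mu p (3*t+1) :: (real \<times> (real^'n)) pmf)) = cosh s"
      using E_S[where g="\<lambda>x. exp (s * x)" and p=p and t=t] by (simp add: cosh_def)
    have c: "cosh s \<le> exp (1\<^sup>2 * s\<^sup>2 / 2)" using cosh_le_exp[of s] by simp
    show "AE w in M. real_cond_exp M (condalg M Ab (\<lambda>x. x) dd t) (\<lambda>w. exp (s * ?ell w)) w \<le> exp (1\<^sup>2 * s\<^sup>2 / 2)"
      using a unfolding M_def
    proof eventually_elim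
      case (elim w)
      then show ?case using b c by simp
    qed
  qed
qed


theorem theorem6:
  fixes p :: real
  assumes "0 < p" and "p < 1"
  shows "\<exists>(Abar :: real^'n^'n) (f :: real^'n \<Rightarrow> real^'n)
           (M :: (nat \<Rightarrow> real \<times> (real^'n)) measure) (d :: nat \<Rightarrow> (nat \<Rightarrow> real \<times> (real^'n)) \<Rightarrow> real^'n)
           (lam :: real) (L :: real) (sig :: real).
     prob_space M \<and> (\<forall>t. d t \<in> borel_measurable M)
     \<comment> \<open>probabilistic attack model\<close>
     \<and> (\<forall>t. measure M {w \<in> space M. d t w \<noteq> 0} = p)
     \<and> prob_space.indep_events M (\<lambda>t. {w \<in> space M. d t w \<noteq> 0}) UNIV
     \<comment> \<open>(A3)\<close>
     \<and> lam > 0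
     \<and> (\<forall>t x. cond_on M (\<lambda>w. d t w \<noteq> 0)
           (\<lambda>w. lambda_min (\<chi> i j. real_cond_exp M (condalg M Abar f d t)
                   (\<lambda>w. f (x + d t w) $ i * f (x + d t w) $ j) w) \<ge> lam\<^sup>2))
     \<comment> \<open>(A4)\<close>
     \<and> f 0 = 0 \<and> L-lipschitz_on UNIV f
     \<comment> \<open>(A6)\<close>
     \<and> (\<forall>t. \<exists>(ell :: _ \<Rightarrow> real) (hhat :: _ \<Rightarrow> real^'n).
           ell \<in> borel_measurable M \<and> hhat \<in> borel_measurable M
         \<and> cond_on M (\<lambda>w. d t w \<noteq> 0) (\<lambda>w. d t w = ell w *\<^sub>R hhat w)
         \<and> cond_indep_on M (condalg M Abar f d t) (\<lambda>w. d t w \<noteq> 0) ell hhat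
         \<and> cond_on M (\<lambda>w. d t w \<noteq> 0) (\<lambda>w. norm (hhat w) = 1)
         \<and> (\<forall>i. cond_on M (\<lambda>w. d t w \<noteq> 0)
                 (\<lambda>w. real_cond_exp M (condalg M Abar f d t) (\<lambda>w. hhat w $ i) w = 0))
         \<and> integrable M ell
         \<and> cond_on M (\<lambda>w. d t w \<noteq> 0) (\<lambda>w. real_cond_exp M (condalg M Abar f d t) ell w = 0)
         \<and> (\<forall>s. integrable M (\<lambda>w. exp (s * ell w))
               \<and> cond_on M (\<lambda>w. d t w \<noteq> 0)
                   (\<lambda>w. real_cond_exp M (condalg M Abar f d t) (\<lambda>w. exp (s * ell w)) w
                        \<le> exp (sig\<^sup>2 * s\<^sup>2 / 2))))
     \<comment> \<open>stability condition violated\<close>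
     \<and> L > 0 \<and> onorm (\<lambda>v. Abar *v v) \<ge> 1 / L
     \<comment> \<open>conclusion\<close>
     \<and> (\<forall>T::nat. T \<ge> 1 \<longrightarrow>
          measure M {w \<in> space M. \<not> (\<forall>A. cost Abar f d Abar T w \<le> cost Abar f d A T w)}
            \<ge> p * (1 - (1 - p) ^ (T - 1)))"
proof -
  have p01: "0 \<le> p" "p \<le> 1" using assms by auto
  have on: "onorm (\<lambda>v. (Ab :: real^'n^'n) *v v) = 4"
  proof -
    have i: "onorm (\<lambda>x::real^'n. x) = 1" by (rule onorm_id)
    have "onorm (\<lambda>x::real^'n. 4 *\<^sub>R x) = \<bar>4\<bar> * onorm (\<lambda>x::real^'n. x)"
      by (rule onorm_scaleR[OF bounded_linear_ident])
    then show ?thesis by (simp add: Ab_mult i)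
  qed
  have ddm: "dd t \<in> borel_measurable (MM p :: (nat \<Rightarrow> real \<times> (real^'n)) measure)" for t
    unfolding MM_PM by (rule dd_meas)
  show ?thesis
    apply (rule exI[of _ "Ab :: real^'n^'n"])
    apply (rule exI[of _ "\<lambda>x::real^'n. x"])
    apply (rule exI[of _ "MM p :: (nat \<Rightarrow> real \<times> (real^'n)) measure"])
    apply (rule exI[of _ dd])
    apply (rule exI[of _ "sqrt (1 / real CARD('n))"])
    apply (rule exI[of _ "1::real"])
    apply (rule exI[of _ "1::real"])
    apply (intro conjI allI impI)
    apply (rule prob_MM)
    apply (rule ddm)
    apply (rule prob_F[OF p01])
    apply (rule indepF[OF p01])
    apply simp
    apply (rule A3)
    apply simp
    apply (rule lipschitz_on_id)
    apply (rule A6[OF p01])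
    apply simp
    apply (simp add: on)
    apply (rule bound[OF assms], assumption)
    done
qed


end
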